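(* Let $n\ge 0$, let $A\in\mathcal{PM}(n)$ and let $v\in\{0,1\}^n$ be a row vector. Then $v$ is a poset vector of $A$ if and only if $\mathrm{supp}(v)$ is an order ideal of $P_A$. Moreover, the map $v\mapsto \mathrm{supp}(v)$ is a bijection between the set of poset vectors of $A$ (equivalently, the set of $v$-extensions $A^v$ of $A$) and the set of order ideals of $P_A$.
   Context: Let $X_n=\{0,1,\ldots,n-1\}$. A naturally labeled (NL) poset on $X_n$ is a partial order $\preceq$ on $X_n$ such that $x\preceq y$ implies $x\le y$ in the usual integer order. Its poset matrix is the $n\times n$ $(0,1)$-matrix $A=(a_{i,j})_{i,j\in X_n}$ (indices starting from $0$) with $a_{i,j}=1$ if $j\preceq i$ and $a_{i,j}=0$ otherwise. $\mathcal{PM}(n)$ denotes the set of poset matrices of NL posets on $X_n$, and for $A\in\mathcal{PM}(n)$, $P_A$ is the unique NL poset on $X_n$ whose poset matrix is $A$. For a row vector $v\in\{0,1\}^n$, the $v$-extension of $A$ is the $(n+1)\times(n+1)$ matrix $A^v=\begin{bmatrix}A&\mathbf{0}\\ v&1\end{bmatrix}$, and $v$ is called a poset vector of $A$ if $A^v\in\mathcal{PM}(n+1)$. $\mathrm{supp}(v)=\{j\in X_n: v_j=1\}$. An order ideal of a poset is a downward closed subset (the empty set included). *)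

theory Defs
  imports Main
begin

text \<open>Elements of X_n are the naturals i < n. A binary relation R on X_n is given as
  R x y meaning x \<preceq> y. Matrices are functions nat \<Rightarrow> nat \<Rightarrow> nat
  (row index, column index), with all entries outside X_n \<times> X_n equal to 0;
  row vectors are functions nat \<Rightarrow> nat, zero outside X_n.\<close>

definition NL_poset :: "nat \<Rightarrow> (nat \<Rightarrow> nat \<Rightarrow> bool) \<Rightarrow> bool" where
  "NL_poset n R \<longleftrightarrow>
     (\<forall>x y. R x y \<longrightarrow> x < n \<and> y < n) \<and>
     (\<forall>x<n. R x x) \<and>
     (\<forall>x y. R x y \<and> R y x \<longrightarrow> x = y) \<and>
     (\<forall>x y z. R x y \<and> R y z \<longrightarrow> R x z) \<and>
     (\<forall>x y. R x y \<longrightarrow> x \<le> y)"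

definition poset_matrix :: "nat \<Rightarrow> (nat \<Rightarrow> nat \<Rightarrow> bool) \<Rightarrow> nat \<Rightarrow> nat \<Rightarrow> nat" where
  "poset_matrix n R = (\<lambda>i j. if i < n \<and> j < n \<and> R j i then 1 else 0)"

definition PM :: "nat \<Rightarrow> (nat \<Rightarrow> nat \<Rightarrow> nat) set" where
  "PM n = {poset_matrix n R | R. NL_poset n R}"

definition P_of :: "nat \<Rightarrow> (nat \<Rightarrow> nat \<Rightarrow> nat) \<Rightarrow> (nat \<Rightarrow> nat \<Rightarrow> bool)" where
  "P_of n A = (THE R. NL_poset n R \<and> poset_matrix n R = A)"

definition zero_one_vectors :: "nat \<Rightarrow> (nat \<Rightarrow> nat) set" where
  "zero_one_vectors n = {v. (\<forall>j<n. v j \<in> {0, 1}) \<and> (\<forall>j\<ge>n. v j = 0)}"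

definition v_extension :: "nat \<Rightarrow> (nat \<Rightarrow> nat \<Rightarrow> nat) \<Rightarrow> (nat \<Rightarrow> nat) \<Rightarrow> nat \<Rightarrow> nat \<Rightarrow> nat" where
  "v_extension n A v = (\<lambda>i j.
     if i < n \<and> j < n then A i j
     else if i = n \<and> j < n then v j
     else if i = n \<and> j = n then 1
     else 0)"

definition poset_vector :: "nat \<Rightarrow> (nat \<Rightarrow> nat \<Rightarrow> nat) \<Rightarrow> (nat \<Rightarrow> nat) \<Rightarrow> bool" where
  "poset_vector n A v \<longleftrightarrow> v_extension n A v \<in> PM (Suc n)"

definition supp :: "nat \<Rightarrow> (nat \<Rightarrow> nat) \<Rightarrow> nat set" where
  "supp n v = {j. j < n \<and> v j = 1}"

definition order_ideal :: "nat \<Rightarrow> (nat \<Rightarrow> nat \<Rightarrow> bool) \<Rightarrow> nat set \<Rightarrow> bool" where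
  "order_ideal n R I \<longleftrightarrow> I \<subseteq> {..<n} \<and> (\<forall>x\<in>I. \<forall>y. R y x \<longrightarrow> y \<in> I)"

end

theory Submission
  imports Defs
begin

lemma NL_D:
  assumes "NL_poset n R"
  shows "\<forall>x y. R x y \<longrightarrow> x < n \<and> y < n" "\<forall>x<n. R x x"
    "\<forall>x y. R x y \<and> R y x \<longrightarrow> x = y" "\<forall>x y z. R x y \<and> R y z \<longrightarrow> R x z"
    "\<forall>x y. R x y \<longrightarrow> x \<le> y"
proof -
  note c = assms[unfolded NL_poset_def]
  show "\<forall>x y. R x y \<longrightarrow> x < n \<and> y < n" using c by (rule conjunct1)
  show "\<forall>x<n. R x x" using c[THEN conjunct2] by (rule conjunct1)
  show "\<forall>x y. R x y \<and> R y x \<longrightarrow> x = y" using c[THEN conjunct2, THEN conjunct2] by (rule conjunct1)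
  show "\<forall>x y z. R x y \<and> R y z \<longrightarrow> R x z" using c[THEN conjunct2, THEN conjunct2, THEN conjunct2] by (rule conjunct1)
  show "\<forall>x y. R x y \<longrightarrow> x \<le> y" using c[THEN conjunct2, THEN conjunct2, THEN conjunct2] by (rule conjunct2)
qed

lemma pm_at: "x < n \<Longrightarrow> y < n \<Longrightarrow> poset_matrix n R y x = (if R x y then 1 else 0)"
  unfolding poset_matrix_def by simp

lemma pm_inj:
  assumes "NL_poset n R1" "NL_poset n R2" "poset_matrix n R1 = poset_matrix n R2"
  shows "R1 = R2"
proof (intro ext)
  fix x y
  show "R1 x y = R2 x y"
  proof (cases "x < n \<and> y < n")
    case True
    have "poset_matrix n R1 y x = poset_matrix n R2 y x" by (simp only: assms(3))
    then have "(if R1 x y then 1 else 0 :: nat) = (if R2 x y then 1 else 0)"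
      using True pm_at[of x n y] by simp
    then show ?thesis by (cases "R1 x y"; cases "R2 x y") simp_all
  next
    case False
    then show ?thesis using NL_D(1)[OF assms(1)] NL_D(1)[OF assms(2)] by blast
  qed
qed

lemma PM_iff: "A \<in> PM n \<longleftrightarrow> (\<exists>R. A = poset_matrix n R \<and> NL_poset n R)"
  unfolding PM_def by (simp only: mem_Collect_eq Setcompr_eq_image)

lemma P_of_pm:
  assumes "NL_poset n R"
  shows "P_of n (poset_matrix n R) = R"
  unfolding P_of_def
proof (rule the_equality)
  show "NL_poset n R \<and> poset_matrix n R = poset_matrix n R" using assms by simp
next
  fix R' assume "NL_poset n R' \<and> poset_matrix n R' = poset_matrix n R"
  then show "R' = R" using pm_inj[of n R' R] assms by blast
qed

lemma ext_iff:
  assumes R: "NL_poset n R" and v: "v \<in> zero_one_vectors n"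
  shows "v_extension n (poset_matrix n R) v \<in> PM (Suc n) \<longleftrightarrow> order_ideal n R (supp n v)"
proof
  assume "v_extension n (poset_matrix n R) v \<in> PM (Suc n)"
  then obtain R' where R': "NL_poset (Suc n) R'"
    and eq: "poset_matrix (Suc n) R' = v_extension n (poset_matrix n R) v"
    unfolding PM_iff by (elim exE conjE) (rule that, assumption, rule sym)
  have a: "R' x y" if "R x y" for x y
  proof -
    have "x < n" "y < n" using NL_D(1)[OF R] that by auto
    have "poset_matrix (Suc n) R' y x = v_extension n (poset_matrix n R) v y x"
      by (simp only: eq)
    then show ?thesis using \<open>x<n\<close> \<open>y<n\<close> that
      by (simp add: poset_matrix_def v_extension_def split: if_splits)
  qed
  have b: "j \<in> supp n v" if "j < n" "R' j n" for j
  proof -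
    have "poset_matrix (Suc n) R' n j = v_extension n (poset_matrix n R) v n j"
      by (simp only: eq)
    then show ?thesis using that
      by (simp add: poset_matrix_def v_extension_def supp_def split: if_splits)
  qed
  have c: "R' j n" if "j \<in> supp n v" for j
  proof -
    have j: "j < n" "v j = 1" using that unfolding supp_def by simp_all
    have "poset_matrix (Suc n) R' n j = v_extension n (poset_matrix n R) v n j"
      by (simp only: eq)
    also have "\<dots> = v j" using j(1) unfolding v_extension_def by simp
    finally have "(if R' j n then 1 else 0 :: nat) = 1"
      using pm_at[of j "Suc n" n R'] j by simp
    then show ?thesis by (cases "R' j n") simp_all
  qed
  show "order_ideal n R (supp n v)"
    unfolding order_ideal_def
  proof (intro conjI ballI allI impI)
    show "supp n v \<subseteq> {..<n}" by (auto simp: supp_def)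
  next
    fix x y assume x: "x \<in> supp n v" and "R y x"
    then have "R' y x" using a by blast
    moreover have "R' x n" using c x by blast
    ultimately have "R' y n" using NL_D(4)[OF R'] by blast
    moreover have "y < n" using NL_D(1)[OF R] \<open>R y x\<close> by blast
    ultimately show "y \<in> supp n v" using b by blast
  qed
next
  assume I: "order_ideal n R (supp n v)"
  define R' where "R' = (\<lambda>x y. R x y \<or> (y = n \<and> (x = n \<or> (x < n \<and> v x = 1))))"
  have NL: "NL_poset (Suc n) R'"
  proof -
    note r1 = NL_D(1)[OF R] and r2 = NL_D(2)[OF R] and r3 = NL_D(3)[OF R]
      and r4 = NL_D(4)[OF R] and r5 = NL_D(5)[OF R]
    have id: "\<And>x y. x \<in> supp n v \<Longrightarrow> R y x \<Longrightarrow> y \<in> supp n v"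
      using I unfolding order_ideal_def by blast
    have p1: "\<forall>x y. R' x y \<longrightarrow> x < Suc n \<and> y < Suc n"
    proof (intro allI impI)
      fix x y assume h: "R' x y" show "x < Suc n \<and> y < Suc n"
      proof (cases "R x y")
        case True then have "x < n \<and> y < n" using r1 by blast
        then show ?thesis by simp
      next
        case False then show ?thesis using h unfolding R'_def by auto
      qed
    qed
    have p2: "\<forall>x<Suc n. R' x x"
    proof (intro allI impI)
      fix x :: nat assume "x < Suc n" then show "R' x x" using r2 unfolding R'_def
        by (auto simp: less_Suc_eq)
    qed
    have p3: "\<forall>x y. R' x y \<and> R' y x \<longrightarrow> x = y"
    proof (intro allI impI)
      fix x y assume h: "R' x y \<and> R' y x" show "x = y"
      proof (cases "R x y")
        case True
        show ?thesis
        proof (cases "R y x")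
          case True then show ?thesis using r3 \<open>R x y\<close> by blast
        next
          case False then have "x = n" using h unfolding R'_def by blast
          then show ?thesis using r1 \<open>R x y\<close> by blast
        qed
      next
        case False then have "y = n" using h unfolding R'_def by blast
        then show ?thesis using h r1 unfolding R'_def by blast
      qed
    qed
    have p4: "\<forall>x y z. R' x y \<and> R' y z \<longrightarrow> R' x z"
    proof (intro allI impI)
      fix x y z assume h: "R' x y \<and> R' y z" show "R' x z"
      proof (cases "R y z")
        case True
        show ?thesis
        proof (cases "R x y")
          case True then show ?thesis using r4 \<open>R y z\<close> unfolding R'_def by blast
        next
          case False then have "y = n" using h unfolding R'_def by blast
          then show ?thesis using r1 \<open>R y z\<close> by blast
        qed
      next
        case False then have z: "z = n" and y: "y = n \<or> (y < n \<and> v y = 1)"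
          using h unfolding R'_def by blast+
        show ?thesis
        proof (cases "y = n")
          case True then show ?thesis using h z unfolding R'_def by blast
        next
          case False
          then have ys: "y \<in> supp n v" using y by (simp add: supp_def)
          show ?thesis
          proof (cases "R x y")
            case True
            then have "x \<in> supp n v" using id ys by blast
            then show ?thesis using z unfolding R'_def supp_def by blast
          next
            case False then have "y = n" using h unfolding R'_def by blast
            then show ?thesis using \<open>y \<noteq> n\<close> by blast
          qed
        qed
      qed
    qed
    have p5: "\<forall>x y. R' x y \<longrightarrow> x \<le> y"
    proof (intro allI impI)
      fix x y assume h: "R' x y" show "x \<le> y"
      proof (cases "R x y")
        case True then show ?thesis using r5 by blast
      next
        case False then show ?thesis using h unfolding R'_def by auto
      qed
    qed
    show ?thesis unfolding NL_poset_def
      by (rule conjI[OF p1 conjI[OF p2 conjI[OF p3 conjI[OF p4 p5]]]])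
  qed
  have "poset_matrix (Suc n) R' = v_extension n (poset_matrix n R) v"
  proof (intro ext)
    fix i j
    have r1: "\<forall>x y. R x y \<longrightarrow> x < n \<and> y < n" using NL_D(1)[OF R] by blast
    have vv: "j < n \<Longrightarrow> v j = 0 \<or> v j = 1" using v unfolding zero_one_vectors_def by auto
    show "poset_matrix (Suc n) R' i j = v_extension n (poset_matrix n R) v i j"
    proof (cases "i < n \<and> j < n")
      case True then show ?thesis unfolding poset_matrix_def v_extension_def R'_def by auto
    next
      case False
      show ?thesis
      proof (cases "i = n \<and> j < n")
        case True then show ?thesis using vv r1 unfolding poset_matrix_def v_extension_def R'_def
          by auto
      next
        case False
        then show ?thesis using \<open>\<not> (i < n \<and> j < n)\<close> r1 unfolding poset_matrix_def v_extension_def R'_def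
          by (auto simp: less_Suc_eq)
      qed
    qed
  qed
  then show "v_extension n (poset_matrix n R) v \<in> PM (Suc n)"
    using NL unfolding PM_iff by (intro exI[of _ R'] conjI) (rule sym)
qed

theorem theorem2p1:
  fixes n :: nat and A :: "nat \<Rightarrow> nat \<Rightarrow> nat"
  assumes "A \<in> PM n"
  shows "(\<forall>v\<in>zero_one_vectors n.
            poset_vector n A v \<longleftrightarrow> order_ideal n (P_of n A) (supp n v))
       \<and> bij_betw (supp n) {v \<in> zero_one_vectors n. poset_vector n A v}
                           {I. order_ideal n (P_of n A) I}
       \<and> bij_betw (v_extension n A) {v \<in> zero_one_vectors n. poset_vector n A v}
                           {v_extension n A v | v. v \<in> zero_one_vectors n \<and> poset_vector n A v}"
proof -
  obtain R where R: "NL_poset n R" and A: "A = poset_matrix n R"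
    using assms unfolding PM_iff by (elim exE conjE) (rule that)
  have P: "P_of n A = R" using A R P_of_pm by simp
  have part1: "\<forall>v\<in>zero_one_vectors n.
            poset_vector n A v \<longleftrightarrow> order_ideal n (P_of n A) (supp n v)"
    using ext_iff[OF R] P_of_pm[OF R] unfolding A poset_vector_def by simp
  have inj01: "v = w" if "v \<in> zero_one_vectors n" "w \<in> zero_one_vectors n"
      "\<And>j. j < n \<Longrightarrow> v j = w j" for v w
  proof (rule ext)
    fix j show "v j = w j" using that unfolding zero_one_vectors_def
      by (cases "j < n") auto
  qed
  have b1: "bij_betw (supp n) {v \<in> zero_one_vectors n. poset_vector n A v}
                           {I. order_ideal n (P_of n A) I}"
    unfolding bij_betw_def
  proof (intro conjI)
    show "inj_on (supp n) {v \<in> zero_one_vectors n. poset_vector n A v}"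
    proof (rule inj_onI)
      fix v w assume v: "v \<in> {v \<in> zero_one_vectors n. poset_vector n A v}"
        and w: "w \<in> {v \<in> zero_one_vectors n. poset_vector n A v}" and s: "supp n v = supp n w"
      show "v = w"
      proof (rule inj01)
        show "v \<in> zero_one_vectors n" "w \<in> zero_one_vectors n" using v w by auto
        fix j assume j: "j < n"
        have "(j \<in> supp n v) = (j \<in> supp n w)" using s by simp
        moreover have "v j = 0 \<or> v j = 1" "w j = 0 \<or> w j = 1" using v w j unfolding zero_one_vectors_def by auto
        ultimately show "v j = w j" using j unfolding supp_def by auto
      qed
    qed
  next
    show "supp n ` {v \<in> zero_one_vectors n. poset_vector n A v} = {I. order_ideal n (P_of n A) I}"
    proof
      show "supp n ` {v \<in> zero_one_vectors n. poset_vector n A v} \<subseteq> {I. order_ideal n (P_of n A) I}"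
        using part1 by auto
    next
      show "{I. order_ideal n (P_of n A) I} \<subseteq> supp n ` {v \<in> zero_one_vectors n. poset_vector n A v}"
      proof
        fix I assume "I \<in> {I. order_ideal n (P_of n A) I}"
        then have I: "order_ideal n (P_of n A) I" by simp
        define v where "v = (\<lambda>j. if j < n \<and> j \<in> I then 1 else 0::nat)"
        have v01: "v \<in> zero_one_vectors n" by (auto simp: v_def zero_one_vectors_def)
        have sv: "supp n v = I" using I by (auto simp: v_def supp_def order_ideal_def)
        then have "poset_vector n A v" using part1 v01 I by simp
        then show "I \<in> supp n ` {v \<in> zero_one_vectors n. poset_vector n A v}"
          using v01 sv by blast
      qed
    qed
  qed
  have b2: "bij_betw (v_extension n A) {v \<in> zero_one_vectors n. poset_vector n A v}
                           {v_extension n A v | v. v \<in> zero_one_vectors n \<and> poset_vector n A v}"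
    unfolding bij_betw_def
  proof (intro conjI)
    show "inj_on (v_extension n A) {v \<in> zero_one_vectors n. poset_vector n A v}"
    proof (rule inj_onI)
      fix v w assume v: "v \<in> {v \<in> zero_one_vectors n. poset_vector n A v}"
        and w: "w \<in> {v \<in> zero_one_vectors n. poset_vector n A v}"
        and s: "v_extension n A v = v_extension n A w"
      show "v = w"
      proof (rule inj01)
        show "v \<in> zero_one_vectors n" "w \<in> zero_one_vectors n" using v w by auto
        fix j assume j: "j < n"
        have "v_extension n A v n j = v_extension n A w n j" using s by simp
        then show "v j = w j" using j by (simp add: v_extension_def)
      qed
    qed
  qed blast
  show ?thesis using part1 b1 b2 by (intro conjI)
qed

end
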